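(* Let $K\ge2$, $r\in[0,1]^K$ with a unique maximizing index $a^*$ (i.e. $r(a^* )>\max_{a\ne a^*}r(a)$), and $g(\theta)=\pi_\theta^\top r$ with $\pi_\theta=\mathrm{softmax}(\theta)$. Let $\theta_1\in\mathbb{R}^K$ be arbitrary and define the normalized policy gradient iterates $\theta_{t+1}=\theta_t+\eta\,\nabla g(\theta_t)/\|\nabla g(\theta_t)\|_2$ with $\eta=1/6$. Then $\inf_{t\ge1}\pi_{\theta_t}(a^* )>0$.
   Context: $\mathrm{softmax}(\theta)(a)=e^{\theta(a)}/\sum_{a'}e^{\theta(a')}$; $\nabla g(\theta)=(\mathrm{diag}(\pi_\theta)-\pi_\theta\pi_\theta^\top)r$, which is nonzero for every $\theta$ under the stated assumptions. *)

theory Defs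
  imports "HOL-Analysis.Analysis"
begin

definition softmax :: "real ^ 'K \<Rightarrow> real ^ 'K" where
  "softmax \<theta> = (\<chi> a. exp (\<theta> $ a) / (\<Sum>a'\<in>UNIV. exp (\<theta> $ a')))"

definition expected_reward :: "real ^ 'K \<Rightarrow> real ^ 'K \<Rightarrow> real" where
  "expected_reward r \<theta> = softmax \<theta> \<bullet> r"

text \<open>Gradient of g, as given in the paper: (diag(pi) - pi pi^T) r,
  i.e. component a is pi(a) * (r(a) - pi^T r).\<close>
definition pg_grad :: "real ^ 'K \<Rightarrow> real ^ 'K \<Rightarrow> real ^ 'K" where
  "pg_grad r \<theta> = (\<chi> a. softmax \<theta> $ a * (r $ a - softmax \<theta> \<bullet> r))"

fun npg_iter :: "real ^ 'K \<Rightarrow> real \<Rightarrow> real ^ 'K \<Rightarrow> nat \<Rightarrow> real ^ 'K" where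
  "npg_iter r \<eta> \<theta>1 0 = \<theta>1"
| "npg_iter r \<eta> \<theta>1 (Suc t) =
     (let \<theta> = npg_iter r \<eta> \<theta>1 t in \<theta> + (\<eta> / norm (pg_grad r \<theta>)) *\<^sub>R pg_grad r \<theta>)"

end

theory Submission
  imports Defs
begin

lemma Z_pos: "0 < (\<Sum>a'\<in>UNIV. exp ((\<theta>::real^'K) $ a'))"
  by (rule sum_pos) auto

lemma sm_nth: "softmax \<theta> $ a = exp (\<theta> $ a) / (\<Sum>a'\<in>UNIV. exp (\<theta> $ a'))"
  by (simp add: softmax_def)

lemma sm_pos: "0 < softmax \<theta> $ a"
  using Z_pos[of \<theta>] by (simp add: sm_nth)

lemma sm_sum: "(\<Sum>a\<in>UNIV. softmax \<theta> $ a) = 1"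
  unfolding sm_nth sum_divide_distrib[symmetric] using Z_pos[of \<theta>] by simp

lemma sm_ratio: "softmax \<theta> $ b = softmax \<theta> $ a * exp (\<theta> $ b - \<theta> $ a)"
  by (simp add: sm_nth exp_diff)

lemma sm_inner: "softmax \<theta> \<bullet> r = (\<Sum>a\<in>UNIV. softmax \<theta> $ a * r $ a)"
  by (simp add: inner_vec_def)

lemma grad_nth: "pg_grad r \<theta> $ a = softmax \<theta> $ a * (r $ a - softmax \<theta> \<bullet> r)"
  by (simp add: pg_grad_def)

lemma grad_sum: "(\<Sum>a\<in>UNIV. pg_grad r \<theta> $ a) = 0"
proof -
  have "(\<Sum>a\<in>UNIV. pg_grad r \<theta> $ a) = (\<Sum>a\<in>UNIV. softmax \<theta> $ a * r $ a) - (\<Sum>a\<in>UNIV. softmax \<theta> $ a) * (softmax \<theta> \<bullet> r)"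
    by (simp add: grad_nth right_diff_distrib sum_subtractf sum_distrib_right)
  also have "\<dots> = 0" by (simp add: sm_sum sm_inner)
  finally show ?thesis .
qed

lemma pair_le: "b \<noteq> a \<Longrightarrow> softmax \<theta> $ b + softmax \<theta> $ a \<le> 1"
proof -
  assume ba: "b \<noteq> a"
  have "sum (\<lambda>x. softmax \<theta> $ x) {b, a} \<le> sum (\<lambda>x. softmax \<theta> $ x) UNIV"
    by (rule sum_mono2) (auto intro: less_imp_le[OF sm_pos])
  thus ?thesis using ba by (simp add: sm_sum)
qed

lemma sum_minus1: "(\<Sum>x\<in>UNIV-{a}. softmax \<theta> $ x) = 1 - softmax \<theta> $ a"
  by (simp add: sum_diff1 sm_sum)

definition phi :: "real \<Rightarrow> real \<Rightarrow> real \<Rightarrow> real" where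
  "phi c \<eta> u = (if c \<le> u then u + 2*\<eta> else c)"

lemma phi_step:
  assumes "u < c \<Longrightarrow> d < 0" "-d \<le> 2*\<eta>"
  shows "phi c \<eta> (u+d) - phi c \<eta> u \<le> (if c \<le> u then d else 0)"
  using assms by (auto simp: phi_def)


context
  fixes r :: "real^'K" and astar :: 'K and \<Delta> :: real and c :: real
  assumes r01: "\<And>a. 0 \<le> r $ a \<and> r $ a \<le> 1"
    and Dpos: "0 < \<Delta>"
    and Dle: "\<And>a. a \<noteq> astar \<Longrightarrow> \<Delta> \<le> r$astar - r$a"
    and card2: "2 \<le> CARD('K)"
    and cdef: "2 * real CARD('K) * exp c \<le> \<Delta>"
begin

lemma ex_other: "\<exists>b. b \<noteq> astar"
proof (rule ccontr)
  assume "\<not> ?thesis"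
  hence "(UNIV::'K set) = {astar}" by auto
  hence "card (UNIV::'K set) = card {astar}" by (rule arg_cong)
  hence "CARD('K) = 1" by simp
  with card2 show False by simp
qed

lemma Dle1: "\<Delta> \<le> 1"
proof -
  obtain b where "b \<noteq> astar" using ex_other by blast
  thus ?thesis using Dle[of b] r01[of b] r01[of astar] by linarith
qed

lemma expc_le1: "exp c \<le> 1"
proof -
  have "2 * real CARD('K) * exp c \<ge> 4 * exp c" using card2
    by (intro mult_right_mono) auto
  thus ?thesis using cdef Dle1 by linarith
qed

lemma s_le1: "softmax \<theta> \<bullet> r \<le> 1"
proof -
  have "(\<Sum>a\<in>UNIV. softmax \<theta> $ a * r $ a) \<le> (\<Sum>a\<in>UNIV. softmax \<theta> $ a)"
    by (rule sum_mono) (use r01 less_imp_le[OF sm_pos] in \<open>auto intro: mult_left_le\<close>)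
  thus ?thesis by (simp add: sm_inner sm_sum)
qed

lemma m_ge: "r$astar - softmax \<theta> \<bullet> r \<ge> (1 - softmax \<theta> $ astar) * \<Delta>"
proof -
  have e1: "r$astar - softmax \<theta> \<bullet> r = (\<Sum>a\<in>UNIV. softmax \<theta> $ a * (r$astar - r$a))"
    by (simp add: sm_inner right_diff_distrib sum_subtractf sum_distrib_right[symmetric] sm_sum)
  have "(\<Sum>a\<in>UNIV. softmax \<theta> $ a * (r$astar - r$a)) \<ge> (\<Sum>a\<in>UNIV. softmax \<theta> $ a * (if a = astar then 0 else \<Delta>))"
    by (rule sum_mono) (use Dle less_imp_le[OF sm_pos] in \<open>auto intro: mult_left_mono\<close>)
  moreover have "(\<Sum>a\<in>UNIV. softmax \<theta> $ a * (if a = astar then 0 else \<Delta>)) = (\<Sum>a\<in>UNIV-{astar}. softmax \<theta> $ a) * \<Delta>"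
  proof -
    let ?f = "\<lambda>a. softmax \<theta> $ a * (if a = astar then 0 else \<Delta>)"
    have "(\<Sum>a\<in>UNIV-{astar}. ?f a) = (\<Sum>a\<in>UNIV. ?f a)" by (subst sum_diff1) simp_all
    moreover have "(\<Sum>a\<in>UNIV-{astar}. ?f a) = (\<Sum>a\<in>UNIV-{astar}. softmax \<theta> $ a * \<Delta>)"
      by (rule sum.cong) auto
    ultimately have "(\<Sum>a\<in>UNIV. ?f a) = (\<Sum>a\<in>UNIV-{astar}. softmax \<theta> $ a * \<Delta>)" by simp
    also have "\<dots> = (\<Sum>a\<in>UNIV-{astar}. softmax \<theta> $ a) * \<Delta>" by (rule sum_distrib_right[symmetric])
    finally show ?thesis .
  qed
  ultimately show ?thesis using e1 by (simp add: sum_minus1)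
qed

lemma m_pos: "0 < r$astar - softmax \<theta> \<bullet> r"
proof -
  obtain b where b: "b \<noteq> astar" using ex_other by blast
  have "0 < softmax \<theta> $ b" by (rule sm_pos)
  hence "0 < 1 - softmax \<theta> $ astar" using pair_le[OF b, of \<theta>] by linarith
  hence "0 < (1 - softmax \<theta> $ astar) * \<Delta>" using Dpos by simp
  thus ?thesis using m_ge[of \<theta>] by linarith
qed

lemma G_star: "0 < pg_grad r \<theta> $ astar"
  using m_pos[of \<theta>] sm_pos[of \<theta> astar] by (simp add: grad_nth)

lemma G_lt:
  assumes b: "b \<noteq> astar" and le: "softmax \<theta> $ b \<le> softmax \<theta> $ astar"
  shows "pg_grad r \<theta> $ b < pg_grad r \<theta> $ astar"
proof (cases "r$b \<le> softmax \<theta> \<bullet> r")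
  case True
  hence "pg_grad r \<theta> $ b \<le> 0" using sm_pos[of \<theta> b]
    by (simp add: grad_nth mult_nonneg_nonpos)
  thus ?thesis using G_star[of \<theta>] by linarith
next
  case False
  have rb: "r$b < r$astar" using Dle[OF b] Dpos by linarith
  have "pg_grad r \<theta> $ b \<le> softmax \<theta> $ astar * (r $ b - softmax \<theta> \<bullet> r)"
    unfolding grad_nth using False le by (intro mult_right_mono) auto
  also have "\<dots> < softmax \<theta> $ astar * (r $ astar - softmax \<theta> \<bullet> r)"
    using rb sm_pos[of \<theta> astar] by (intro mult_strict_left_mono) auto
  finally show ?thesis by (simp add: grad_nth)
qed

lemma G_ge: "pg_grad r \<theta> $ b \<ge> - softmax \<theta> $ b"
proof -
  have "r $ b - softmax \<theta> \<bullet> r \<ge> -1" using r01[of b] s_le1[of \<theta>] by linarith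
  hence "softmax \<theta> $ b * (r $ b - softmax \<theta> \<bullet> r) \<ge> softmax \<theta> $ b * (-1)"
    using sm_pos[of \<theta> b] by (intro mult_left_mono) auto
  thus ?thesis by (simp add: grad_nth)
qed


lemma sumA:
  "(\<Sum>b\<in>{b\<in>UNIV-{astar}. c \<le> \<theta>$b - \<theta>$astar}. pg_grad r \<theta> $ b - pg_grad r \<theta> $ astar) \<le> 0"
proof (cases "softmax \<theta> $ astar > 1/2")
  case True
  show ?thesis
  proof (rule sum_nonpos)
    fix b assume "b \<in> {b\<in>UNIV-{astar}. c \<le> \<theta>$b - \<theta>$astar}"
    hence b: "b \<noteq> astar" by auto
    have "softmax \<theta> $ b \<le> softmax \<theta> $ astar" using pair_le[OF b, of \<theta>] True by linarith
    thus "pg_grad r \<theta> $ b - pg_grad r \<theta> $ astar \<le> 0" using G_lt[OF b] by fastforce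
  qed
next
  case False
  define N where "N = (UNIV::'K set) - {astar}"
  define A where "A = {b\<in>N. c \<le> \<theta>$b - \<theta>$astar}"
  define D where "D = {b\<in>N. \<not> c \<le> \<theta>$b - \<theta>$astar}"
  let ?G = "pg_grad r \<theta>"
  let ?p = "softmax \<theta>"
  let ?h = "\<lambda>b. ?G $ b - ?G $ astar"
  have fN: "finite N" by simp
  have ND: "N = A \<union> D" "A \<inter> D = {}" by (auto simp: A_def D_def)
  have split: "sum ?h N = sum ?h A + sum ?h D"
    using ND by (simp add: sum.union_disjoint)
  have sG: "sum (($) ?G) N = - ?G$astar"
    unfolding N_def by (subst sum_diff1) (simp_all add: grad_sum)
  have sN: "sum ?h N = - ?G$astar - real (card N) * ?G$astar"
    by (simp add: sum_subtractf sG)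
  have "sum ?h D \<ge> sum (\<lambda>b. - ?p $ b - ?G$astar) D"
    by (rule sum_mono) (use G_ge in fastforce)
  hence sD: "sum ?h D \<ge> - sum (($) ?p) D - real (card D) * ?G$astar"
    by (simp add: sum_subtractf sum_negf)
  have "sum (($) ?p) D \<le> sum (\<lambda>b. ?p$astar * exp c) D"
  proof (rule sum_mono)
    fix b assume "b \<in> D"
    hence "\<theta>$b - \<theta>$astar < c" by (auto simp: D_def)
    hence "exp (\<theta>$b - \<theta>$astar) \<le> exp c" by simp
    hence "?p$astar * exp (\<theta>$b - \<theta>$astar) \<le> ?p$astar * exp c"
      using sm_pos[of \<theta> astar] by (intro mult_left_mono) auto
    thus "?p$b \<le> ?p$astar * exp c" by (simp add: sm_ratio[of \<theta> b astar])
  qed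
  hence pD: "sum (($) ?p) D \<le> real (card D) * (?p$astar * exp c)" by simp
  have cDN: "card D \<le> card N" using ND by (simp add: card_mono fN)
  have cNK: "card N \<le> CARD('K)" unfolding N_def by (rule card_mono) auto
  have Gs: "0 < ?G$astar" by (rule G_star)
  have h1: "real (card D) * ?G$astar \<le> real (card N) * ?G$astar"
    using cDN Gs by (intro mult_right_mono) auto
  have pe: "0 \<le> ?p$astar * exp c" using sm_pos[of \<theta> astar] by simp
  have h2: "real (card D) * (?p$astar * exp c) \<le> real CARD('K) * (?p$astar * exp c)"
    using cDN cNK pe by (intro mult_right_mono) auto
  have h3: "?p$astar * (2 * real CARD('K) * exp c) \<le> ?p$astar * \<Delta>"
    using cdef sm_pos[of \<theta> astar] by (intro mult_left_mono) auto
  have h4: "?p$astar * \<Delta> * 1 \<le> ?p$astar * \<Delta> * (2 * (1 - ?p$astar))"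
    using False sm_pos[of \<theta> astar] Dpos by (intro mult_left_mono) auto
  have h5: "?p$astar * ((1 - ?p$astar) * \<Delta>) \<le> ?p$astar * (r$astar - ?p \<bullet> r)"
    using m_ge[of \<theta>] sm_pos[of \<theta> astar] by (intro mult_left_mono) auto
  have h6: "?G$astar = ?p$astar * (r$astar - ?p \<bullet> r)" by (simp add: grad_nth)
  have "sum ?h A \<le> - ?G$astar + real CARD('K) * (?p$astar * exp c)"
    using split sN sD pD h1 h2 by linarith
  also have "\<dots> \<le> 0"
    using h3 h4 h5 h6 by (simp add: algebra_simps)
  finally show ?thesis by (simp add: A_def N_def)
qed

lemma pot_step:
  assumes eta: "0 < \<eta>"
  shows "(\<Sum>b\<in>UNIV-{astar}. phi c \<eta> ((\<theta> + (\<eta> / norm (pg_grad r \<theta>)) *\<^sub>R pg_grad r \<theta>)$b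
            - (\<theta> + (\<eta> / norm (pg_grad r \<theta>)) *\<^sub>R pg_grad r \<theta>)$astar))
         \<le> (\<Sum>b\<in>UNIV-{astar}. phi c \<eta> (\<theta>$b - \<theta>$astar))"
proof -
  let ?G = "pg_grad r \<theta>"
  define \<theta>' where "\<theta>' = \<theta> + (\<eta> / norm ?G) *\<^sub>R ?G"
  define k where "k = \<eta> / norm ?G"
  have nG: "0 < norm ?G" using G_star[of \<theta>] component_le_norm_cart[of ?G astar] by linarith
  have k: "0 < k" using nG eta by (simp add: k_def)
  have kn: "k * norm ?G = \<eta>" using nG by (simp add: k_def)
  define d where "d b = k * (?G$b - ?G$astar)" for b
  have u': "\<theta>'$b - \<theta>'$astar = (\<theta>$b - \<theta>$astar) + d b" for b
    by (simp add: \<theta>'_def d_def k_def algebra_simps)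
  have dneg: "d b < 0" if b: "b \<noteq> astar" and lt: "\<theta>$b - \<theta>$astar < c" for b
  proof -
    have "exp (\<theta>$b - \<theta>$astar) \<le> exp c" using lt by simp
    hence e1: "exp (\<theta>$b - \<theta>$astar) \<le> 1" using expc_le1 by linarith
    have "softmax \<theta> $ b = softmax \<theta> $ astar * exp (\<theta>$b - \<theta>$astar)" by (rule sm_ratio)
    also have "\<dots> \<le> softmax \<theta> $ astar * 1"
      using e1 sm_pos[of \<theta> astar] by (intro mult_left_mono) auto
    finally have "?G$b < ?G$astar" using G_lt[OF b] by simp
    thus ?thesis using k by (simp add: d_def mult_pos_neg)
  qed
  have dbound: "- d b \<le> 2 * \<eta>" for b
  proof -
    have "?G$astar - ?G$b \<le> 2 * norm ?G"
      using component_le_norm_cart[of ?G astar] component_le_norm_cart[of ?G b] by linarith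
    hence "k * (?G$astar - ?G$b) \<le> k * (2 * norm ?G)" using k by (intro mult_left_mono) auto
    thus ?thesis using kn by (simp add: d_def algebra_simps)
  qed
  have "(\<Sum>b\<in>UNIV-{astar}. phi c \<eta> (\<theta>'$b - \<theta>'$astar)) - (\<Sum>b\<in>UNIV-{astar}. phi c \<eta> (\<theta>$b - \<theta>$astar))
      = (\<Sum>b\<in>UNIV-{astar}. phi c \<eta> ((\<theta>$b - \<theta>$astar) + d b) - phi c \<eta> (\<theta>$b - \<theta>$astar))"
    by (simp add: u' sum_subtractf)
  also have "\<dots> \<le> (\<Sum>b\<in>UNIV-{astar}. if c \<le> \<theta>$b - \<theta>$astar then d b else 0)"
    by (rule sum_mono, rule phi_step) (use dneg dbound in auto)
  also have "\<dots> = (\<Sum>b\<in>{b\<in>UNIV-{astar}. c \<le> \<theta>$b - \<theta>$astar}. d b)"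
    by (rule sum.inter_filter[symmetric]) simp
  also have "\<dots> = k * (\<Sum>b\<in>{b\<in>UNIV-{astar}. c \<le> \<theta>$b - \<theta>$astar}. ?G$b - ?G$astar)"
    by (simp add: d_def sum_distrib_left)
  also have "\<dots> \<le> 0" using k sumA[of \<theta>] by (simp add: mult_nonneg_nonpos)
  finally show ?thesis by (simp add: \<theta>'_def)
qed

end


lemma pot_bound:
  assumes "b \<noteq> astar" "0 \<le> \<eta>"
  shows "(\<theta>::real^'K)$b - \<theta>$astar \<le> (\<Sum>b\<in>UNIV-{astar}. phi c \<eta> (\<theta>$b - \<theta>$astar)) - real (card (UNIV-{astar}::'K set)) * c + c"
proof -
  let ?f = "\<lambda>b. phi c \<eta> (\<theta>$b - \<theta>$astar) - c"
  have "?f b \<le> sum ?f (UNIV-{astar})"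
    by (rule member_le_sum) (use assms in \<open>auto simp: phi_def\<close>)
  moreover have "\<theta>$b - \<theta>$astar \<le> phi c \<eta> (\<theta>$b - \<theta>$astar)" using assms by (simp add: phi_def)
  ultimately show ?thesis by (simp add: sum_subtractf)
qed

lemma pstar_lb:
  assumes "\<And>b. b \<noteq> astar \<Longrightarrow> (\<theta>::real^'K)$b - \<theta>$astar \<le> U"
  shows "1 / (real CARD('K) * exp (max U 0)) \<le> softmax \<theta> $ astar"
proof -
  let ?M = "max U 0"
  have "(\<Sum>a\<in>UNIV. exp (\<theta>$a)) \<le> (\<Sum>a\<in>(UNIV::'K set). exp (\<theta>$astar) * exp ?M)"
  proof (rule sum_mono)
    fix a :: 'K
    have "\<theta>$a \<le> \<theta>$astar + ?M" using assms[of a] by (cases "a = astar") auto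
    hence "exp (\<theta>$a) \<le> exp (\<theta>$astar + ?M)" by simp
    thus "exp (\<theta>$a) \<le> exp (\<theta>$astar) * exp ?M" by (simp add: exp_add)
  qed
  hence Z: "(\<Sum>a\<in>UNIV. exp (\<theta>$a)) \<le> real CARD('K) * exp (\<theta>$astar) * exp ?M" by simp
  have "exp (\<theta>$astar) / (real CARD('K) * exp (\<theta>$astar) * exp ?M) \<le> exp (\<theta>$astar) / (\<Sum>a\<in>UNIV. exp (\<theta>$a))"
    by (rule divide_left_mono[OF Z]) (use Z_pos[of \<theta>] in auto)
  thus ?thesis by (simp add: sm_nth)
qed

theorem lemma4:
  fixes r \<theta>1 :: "real ^ 'K" and astar :: 'K
  assumes "CARD('K) \<ge> 2"
    and "\<forall>a. 0 \<le> r $ a \<and> r $ a \<le> 1"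
    and "\<forall>a. a \<noteq> astar \<longrightarrow> r $ a < r $ astar"
  shows "(INF t\<in>{1..}. softmax (npg_iter r (1/6) \<theta>1 (t - 1)) $ astar) > 0"
proof -
  define N where "N = (UNIV::'K set) - {astar}"
  have "\<exists>b. b \<noteq> astar"
  proof (rule ccontr)
    assume "\<not> ?thesis"
    hence "(UNIV::'K set) = {astar}" by auto
    hence "card (UNIV::'K set) = card {astar}" by (rule arg_cong)
    hence "CARD('K) = 1" by simp
    with assms(1) show False by simp
  qed
  hence Nne: "N \<noteq> {}" by (auto simp: N_def)
  define \<Delta> where "\<Delta> = Min ((\<lambda>b. r$astar - r$b) ` N)"
  have Dle: "\<And>a. a \<noteq> astar \<Longrightarrow> \<Delta> \<le> r$astar - r$a"
    unfolding \<Delta>_def by (rule Min_le) (auto simp: N_def)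
  have "\<Delta> \<in> (\<lambda>b. r$astar - r$b) ` N" unfolding \<Delta>_def by (rule Min_in) (use Nne in auto)
  hence Dpos: "0 < \<Delta>" using assms(3) by (auto simp: N_def)
  define c where "c = ln (\<Delta> / (2 * real CARD('K)))"
  have cdef: "2 * real CARD('K) * exp c \<le> \<Delta>"
    using Dpos by (simp add: c_def)
  have r01: "\<And>a. 0 \<le> r $ a \<and> r $ a \<le> 1" using assms(2) by blast
  have card2: "2 \<le> CARD('K)" using assms(1) by simp
  define \<theta> where "\<theta> t = npg_iter r (1/6) \<theta>1 t" for t
  define P where "P x = (\<Sum>b\<in>UNIV-{astar}. phi c (1/6) ((x::real^'K)$b - x$astar))" for x
  have eta6: "(0::real) < 1/6" by simp
  have mono: "P (\<theta> t) \<le> P \<theta>1" for t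
  proof (induction t)
    case 0 thus ?case by (simp add: \<theta>_def)
  next
    case (Suc t)
    have "P (\<theta> (Suc t)) \<le> P (\<theta> t)"
      unfolding P_def \<theta>_def npg_iter.simps Let_def
      by (rule pot_step[OF r01 Dpos Dle card2 cdef eta6])
    thus ?case using Suc by linarith
  qed
  define U where "U = P \<theta>1 - real (card N) * c + c"
  have ub: "\<theta> t $ b - \<theta> t $ astar \<le> U" if "b \<noteq> astar" for t b
    using pot_bound[OF that, of "1/6" "\<theta> t" c] mono[of t] by (simp add: U_def P_def N_def)
  define \<beta> where "\<beta> = 1 / (real CARD('K) * exp (max U 0))"
  have bpos: "0 < \<beta>" by (simp add: \<beta>_def)
  have lb: "\<beta> \<le> softmax (\<theta> t) $ astar" for t
    unfolding \<beta>_def by (rule pstar_lb) (rule ub)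
  have "\<beta> \<le> (INF t\<in>{1..}. softmax (npg_iter r (1/6) \<theta>1 (t - 1)) $ astar)"
    by (rule cINF_greatest) (use lb in \<open>auto simp: \<theta>_def\<close>)
  thus ?thesis using bpos by linarith
qed

end
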